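(* Let $P$ be a finite poset and $R$ a commutative unital ring. Then $Z^3_3(P,R)=J^3_2(P,R)$. In particular, $Z^3_3(P,R)$ is an ideal of $I^3(P,R)$.
   Context: For a finite poset $P$, $P^3_\le=\{(x,y,z)\in P^3: x\le y\le z\}$, and $I^3(P,R)$ is the $R$-module of functions $f:P^3_\le\to R$ with multiplication $(fg)(x_1,x_2,x_3)=\sum f(x_1,y_1,y_2)g(y_1,y_2,x_3)$ over all $x_1\le y_1\le x_2\le y_2\le x_3$. For $a\le b$, $l(a,b)$ is the maximum of $|C|-1$ over chains $C$ in the interval $[a,b]$. $J^3_k(P,R)=\{f: f(x_1,x_2,x_3)=0 \text{ whenever } l(x_1,x_3)<k\}$. $[f,g]=fg-gf$; for subsets $U,V$, $[U,V]$ is the $R$-submodule spanned by all $[u,v]$, $u\in U,v\in V$. $Z^3_1(P,R)=J^3_1(P,R)$, $Z^3_2(P,R)=[Z^3_1(P,R),Z^3_1(P,R)]$, $Z^3_3(P,R)=[Z^3_2(P,R),Z^3_2(P,R)]$. *)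

theory Defs
  imports Main
begin

text \<open>An element of I^3(P,R),
  a function on P^3_le = {(x,y,z). x \<le> y \<le> z}, is represented by a function of three
  arguments that vanishes off P^3_le (canonical extension by zero).\<close>

type_synonym ('a, 'r) fun3 = "'a \<Rightarrow> 'a \<Rightarrow> 'a \<Rightarrow> 'r"

definition I3 :: "('a::order, 'r::comm_ring_1) fun3 set" where
  "I3 = {f. \<forall>x y z. \<not> (x \<le> y \<and> y \<le> z) \<longrightarrow> f x y z = 0}"

definition mult3 :: "('a::{order,finite}, 'r::comm_ring_1) fun3 \<Rightarrow> ('a, 'r) fun3 \<Rightarrow> ('a, 'r) fun3" where
  "mult3 f g = (\<lambda>x1 x2 x3. if x1 \<le> x2 \<and> x2 \<le> x3 then
      (\<Sum>(y1, y2) \<in> {(y1, y2). x1 \<le> y1 \<and> y1 \<le> x2 \<and> x2 \<le> y2 \<and> y2 \<le> x3}.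
          f x1 y1 y2 * g y1 y2 x3)
    else 0)"

definition len :: "'a::{order,finite} \<Rightarrow> 'a \<Rightarrow> nat" where
  "len a b = Max {card C - 1 | C. C \<subseteq> {a..b} \<and> Complete_Partial_Order.chain (\<le>) C}"

definition J3 :: "nat \<Rightarrow> ('a::{order,finite}, 'r::comm_ring_1) fun3 set" where
  "J3 k = {f \<in> I3. \<forall>x1 x2 x3. len x1 x3 < k \<longrightarrow> f x1 x2 x3 = 0}"

definition commutator3 :: "('a::{order,finite}, 'r::comm_ring_1) fun3 \<Rightarrow> ('a, 'r) fun3 \<Rightarrow> ('a, 'r) fun3" where
  "commutator3 f g = (\<lambda>x y z. mult3 f g x y z - mult3 g f x y z)"

inductive_set rspan :: "('a, 'r::comm_ring_1) fun3 set \<Rightarrow> ('a, 'r) fun3 set" for S where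
  zero: "(\<lambda>x y z. 0) \<in> rspan S"
| base: "f \<in> S \<Longrightarrow> f \<in> rspan S"
| add: "f \<in> rspan S \<Longrightarrow> g \<in> rspan S \<Longrightarrow> (\<lambda>x y z. f x y z + g x y z) \<in> rspan S"
| smult: "f \<in> rspan S \<Longrightarrow> (\<lambda>x y z. r * f x y z) \<in> rspan S"

definition bracket3 :: "('a::{order,finite}, 'r::comm_ring_1) fun3 set \<Rightarrow> ('a, 'r) fun3 set \<Rightarrow> ('a, 'r) fun3 set" where
  "bracket3 U V = rspan {commutator3 u v | u v. u \<in> U \<and> v \<in> V}"

definition Z3_1 :: "('a::{order,finite}, 'r::comm_ring_1) fun3 set" where
  "Z3_1 = J3 1"

definition Z3_2 :: "('a::{order,finite}, 'r::comm_ring_1) fun3 set" where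
  "Z3_2 = bracket3 Z3_1 Z3_1"

definition Z3_3 :: "('a::{order,finite}, 'r::comm_ring_1) fun3 set" where
  "Z3_3 = bracket3 Z3_2 Z3_2"

definition ideal3 :: "('a::{order,finite}, 'r::comm_ring_1) fun3 set \<Rightarrow> bool" where
  "ideal3 S \<longleftrightarrow> S \<subseteq> I3 \<and> (\<lambda>x y z. 0) \<in> S
     \<and> (\<forall>f\<in>S. \<forall>g\<in>S. (\<lambda>x y z. f x y z + g x y z) \<in> S)
     \<and> (\<forall>f\<in>S. \<forall>r. (\<lambda>x y z. r * f x y z) \<in> S)
     \<and> (\<forall>f\<in>S. \<forall>g\<in>I3. mult3 f g \<in> S \<and> mult3 g f \<in> S)"

end

theory Submission
  imports Defs
begin

lemma len_set_finite:
  "finite {card C - 1 | C. C \<subseteq> {a..b::'a::{order,finite}} \<and> Complete_Partial_Order.chain (\<le>) C}"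
  by (rule finite_image_set) simp

lemma len_ge:
  fixes a b :: "'a::{order,finite}"
  assumes "C \<subseteq> {a..b}" "Complete_Partial_Order.chain (\<le>) C"
  shows "card C - 1 \<le> len a b"
  unfolding len_def using assms by (intro Max_ge[OF len_set_finite]) blast

lemma len_obtain:
  fixes a b :: "'a::{order,finite}"
  shows "\<exists>C. C \<subseteq> {a..b} \<and> Complete_Partial_Order.chain (\<le>) C \<and> len a b = card C - 1"
proof -
  have ne: "{card C - 1 | C. C \<subseteq> {a..b} \<and> Complete_Partial_Order.chain (\<le>) C} \<noteq> {}"
    using chain_empty by blast
  show ?thesis unfolding len_def using Max_in[OF len_set_finite ne] by auto
qed

lemma len_aa: "len (a::'a::{order,finite}) a = 0"
proof -
  obtain C where C: "C \<subseteq> {a..a}" "len a a = card C - 1" using len_obtain by blast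
  have "C \<subseteq> {a}" using C by auto
  hence "card C \<le> 1" using card_mono[of "{a}" C] by simp
  thus ?thesis using C by simp
qed

lemma len_ge2_iff:
  fixes a b :: "'a::{order,finite}"
  shows "2 \<le> len a b \<longleftrightarrow> (\<exists>c. a < c \<and> c < b)"
proof
  assume "2 \<le> len a b"
  then obtain C where C: "C \<subseteq> {a..b}" "2 \<le> card C - 1" using len_obtain by metis
  have "\<not> C \<subseteq> {a,b}"
  proof
    assume "C \<subseteq> {a,b}"
    hence "card C \<le> card {a,b}" by (intro card_mono) auto
    also have "\<dots> \<le> 2" by (simp add: card_insert_le_m1)
    finally show False using C by simp
  qed
  then obtain c where "c \<in> C" "c \<noteq> a" "c \<noteq> b" by blast
  thus "\<exists>c. a < c \<and> c < b" proof (intro exI[of _ c] conjI)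
    have "a \<le> c" "c \<le> b" using C \<open>c \<in> C\<close> by auto
    thus "a < c" "c < b" using \<open>c \<noteq> a\<close> \<open>c \<noteq> b\<close> by auto
  qed
next
  assume "\<exists>c. a < c \<and> c < b"
  then obtain c where c: "a < c" "c < b" by blast
  have "card {a,c,b} - 1 \<le> len a b"
    using c by (intro len_ge) (auto simp: chain_def)
  moreover have "card {a,c,b} = 3" using c by (auto simp: card_insert_if)
  ultimately show "2 \<le> len a b" by simp
qed

lemma len_ge1:
  fixes a b :: "'a::{order,finite}"
  assumes "a < b" shows "1 \<le> len a b"
proof -
  have "card {a,b} - 1 \<le> len a b"
    using assms by (intro len_ge) (auto simp: chain_def)
  moreover have "card {a,b} = 2" using assms by auto
  ultimately show ?thesis by simp
qed

lemma J2_char: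
  "(J3 2 :: ('a::{order,finite}, 'r::comm_ring_1) fun3 set) =
     {f. f \<in> I3 \<and> (\<forall>x1 x2 x3. f x1 x2 x3 \<noteq> 0 \<longrightarrow> (\<exists>c. x1 < c \<and> c < x3))}"
  unfolding J3_def using len_ge2_iff by (auto simp: not_le[symmetric]) blast+

lemma mult3_single:
  fixes F G :: "('a::{order,finite}, 'r::comm_ring_1) fun3"
  assumes "\<And>y1 y2. F x1 y1 y2 * G y1 y2 x3 \<noteq> 0 \<Longrightarrow> y1 = p \<and> y2 = q"
  shows "mult3 F G x1 x2 x3 = (if x1 \<le> p \<and> p \<le> x2 \<and> x2 \<le> q \<and> q \<le> x3
            then F x1 p q * G p q x3 else 0)"
proof (cases "x1 \<le> x2 \<and> x2 \<le> x3")
  case True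
  let ?S = "{(y1, y2). x1 \<le> y1 \<and> y1 \<le> x2 \<and> x2 \<le> y2 \<and> y2 \<le> x3}"
  have "(\<Sum>(y1, y2) \<in> ?S. F x1 y1 y2 * G y1 y2 x3)
      = (\<Sum>y \<in> ?S. if y = (p, q) then F x1 p q * G p q x3 else 0)"
    by (rule sum.cong) (auto dest: assms)
  also have "\<dots> = (if (p,q) \<in> ?S then F x1 p q * G p q x3 else 0)"
    by (rule sum.delta) simp
  finally show ?thesis unfolding mult3_def using True by simp
next
  case False
  thus ?thesis unfolding mult3_def by (auto dest: order_trans)
qed

lemma mult3_nz:
  fixes F G :: "('a::{order,finite}, 'r::comm_ring_1) fun3"
  assumes "mult3 F G x1 x2 x3 \<noteq> 0"
  shows "\<exists>y1 y2. x1 \<le> y1 \<and> y1 \<le> x2 \<and> x2 \<le> y2 \<and> y2 \<le> x3 \<and> F x1 y1 y2 \<noteq> 0 \<and> G y1 y2 x3 \<noteq> 0"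
proof (rule ccontr)
  assume "\<not> ?thesis"
  hence "mult3 F G x1 x2 x3 = 0" unfolding mult3_def
    by (fastforce intro!: sum.neutral)
  thus False using assms by simp
qed

definition ee :: "'a::order \<Rightarrow> 'a \<Rightarrow> 'a \<Rightarrow> ('a, 'r::comm_ring_1) fun3" where
  "ee a b c = (\<lambda>x y z. if x = a \<and> y = b \<and> z = c then 1 else 0)"

definition TT :: "'a::order \<Rightarrow> 'a \<Rightarrow> ('a, 'r::comm_ring_1) fun3" where
  "TT a c = (\<lambda>x y z. if x = a \<and> z = c \<and> a \<le> y \<and> y \<le> c then 1 else 0)"

lemma mult_ee_ee:
  "mult3 (ee a b c) (ee d e f :: ('a::{order,finite}, 'r::comm_ring_1) fun3) =
    (\<lambda>u v w. if u = a \<and> w = f \<and> d = b \<and> e = c \<and> a \<le> b \<and> b \<le> v \<and> v \<le> c \<and> c \<le> f then 1 else 0)"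
proof (intro ext)
  fix u v w
  show "mult3 (ee a b c) (ee d e f :: ('a::{order,finite}, 'r::comm_ring_1) fun3) u v w =
    (if u = a \<and> w = f \<and> d = b \<and> e = c \<and> a \<le> b \<and> b \<le> v \<and> v \<le> c \<and> c \<le> f then 1 else 0)"
    apply (subst mult3_single[where p=b and q=c])
    subgoal by (simp add: ee_def split: if_splits)
    apply (simp add: ee_def)
    done
qed

lemma comm_T:
  fixes a c :: "'a::{order,finite}"
  assumes "a < c"
  shows "commutator3 (ee a a c) (ee a c c) = (TT a c :: ('a, 'r::comm_ring_1) fun3)"
  using assms unfolding commutator3_def mult_ee_ee unfolding TT_def by (intro ext) auto

lemma comm_e:
  fixes a b c :: "'a::{order,finite}"
  assumes "a < b" "b < c"
  shows "commutator3 (ee a b b) (ee b b c) = (ee a b c :: ('a, 'r::comm_ring_1) fun3)"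
proof (intro ext)
  fix u v w
  have "a \<noteq> b" using assms by simp
  moreover have "(b \<le> v \<and> v \<le> b) \<longleftrightarrow> v = b" by auto
  ultimately show "commutator3 (ee a b b) (ee b b c) u v w = (ee a b c :: ('a, 'r::comm_ring_1) fun3) u v w"
    using assms unfolding commutator3_def mult_ee_ee unfolding ee_def
    by (simp add: order.strict_implies_order)
qed

lemma comm_TT:
  fixes a b c :: "'a::{order,finite}"
  assumes "a < b" "b < c"
  shows "commutator3 (TT a b) (TT b c) = (ee a b c :: ('a, 'r::comm_ring_1) fun3)"
proof (intro ext)
  fix u v w
  have 1: "mult3 (TT a b) (TT b c :: ('a, 'r) fun3) u v w = ee a b c u v w"
    apply (subst mult3_single[where p=b and q=b])
    subgoal by (simp add: TT_def split: if_splits)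
    using assms by (auto simp: TT_def ee_def)
  have 2: "mult3 (TT b c) (TT a b :: ('a, 'r) fun3) u v w = 0"
    apply (subst mult3_single[where p=b and q=b])
    subgoal using assms by (simp add: TT_def split: if_splits)
    using assms by (auto simp: TT_def)
  show "commutator3 (TT a b) (TT b c) u v w = (ee a b c :: ('a, 'r::comm_ring_1) fun3) u v w"
    unfolding commutator3_def 1 2 by simp
qed

lemma comm_left:
  fixes a c f :: "'a::{order,finite}"
  assumes "a < c" "c < f" "\<And>m. \<not> (a < m \<and> m < c)"
  shows "commutator3 (TT a c) (ee a c f) = (\<lambda>u v w. ee a a f u v w + (ee a c f :: ('a, 'r::comm_ring_1) fun3) u v w)"
proof (intro ext)
  fix u v w
  have 1: "mult3 (TT a c) (ee a c f :: ('a, 'r) fun3) u v w = ee a a f u v w + ee a c f u v w"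
    apply (subst mult3_single[where p=a and q=c])
    subgoal by (simp add: TT_def ee_def split: if_splits)
    using assms(1,2) assms(3)[of v] by (auto simp: TT_def ee_def order.order_iff_strict)
  have 2: "mult3 (ee a c f) (TT a c :: ('a, 'r) fun3) u v w = 0"
    apply (subst mult3_single[where p=a and q=c])
    subgoal using assms by (simp add: TT_def ee_def split: if_splits)
    using assms by (auto simp: TT_def ee_def)
  show "commutator3 (TT a c) (ee a c f) u v w = ee a a f u v w + (ee a c f :: ('a, 'r::comm_ring_1) fun3) u v w"
    unfolding commutator3_def 1 2 by simp
qed

lemma comm_right:
  fixes a c f :: "'a::{order,finite}"
  assumes "a < c" "c < f" "\<And>m. \<not> (c < m \<and> m < f)"
  shows "commutator3 (ee a c f) (TT c f) = (\<lambda>u v w. ee a f f u v w + (ee a c f :: ('a, 'r::comm_ring_1) fun3) u v w)"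
proof (intro ext)
  fix u v w
  have 1: "mult3 (ee a c f) (TT c f :: ('a, 'r) fun3) u v w = ee a f f u v w + ee a c f u v w"
    apply (subst mult3_single[where p=c and q=f])
    subgoal by (simp add: TT_def ee_def split: if_splits)
    using assms(1,2) assms(3)[of v] by (auto simp: TT_def ee_def order.order_iff_strict)
  have 2: "mult3 (TT c f) (ee a c f :: ('a, 'r) fun3) u v w = 0"
    apply (subst mult3_single[where p=a and q=c])
    subgoal using assms by (simp add: TT_def ee_def split: if_splits)
    using assms by (auto simp: TT_def ee_def)
  show "commutator3 (ee a c f) (TT c f) u v w = ee a f f u v w + (ee a c f :: ('a, 'r::comm_ring_1) fun3) u v w"
    unfolding commutator3_def 1 2 by simp
qed

section \<open>J2 subset Z3\<close>

lemma ee_J1: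
  fixes a b c :: "'a::{order,finite}"
  assumes "a \<le> b" "b \<le> c" "a < c"
  shows "(ee a b c :: ('a, 'r::comm_ring_1) fun3) \<in> J3 1"
  using assms len_ge1[OF assms(3)] unfolding J3_def I3_def ee_def by auto

lemma Z2_base:
  "u \<in> J3 1 \<Longrightarrow> v \<in> J3 1 \<Longrightarrow> commutator3 u v \<in> (Z3_2 :: ('a::{order,finite}, 'r::comm_ring_1) fun3 set)"
  unfolding Z3_2_def bracket3_def Z3_1_def by (rule rspan.base) blast

lemma Z3_base:
  "u \<in> Z3_2 \<Longrightarrow> v \<in> Z3_2 \<Longrightarrow> commutator3 u v \<in> (Z3_3 :: ('a::{order,finite}, 'r::comm_ring_1) fun3 set)"
  unfolding Z3_3_def bracket3_def by (rule rspan.base) blast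

lemma TT_Z2:
  fixes a c :: "'a::{order,finite}"
  assumes "a < c"
  shows "(TT a c :: ('a, 'r::comm_ring_1) fun3) \<in> Z3_2"
proof -
  have "commutator3 (ee a a c) (ee a c c) \<in> (Z3_2 :: ('a,'r) fun3 set)"
    by (intro Z2_base ee_J1) (use assms in auto)
  thus ?thesis by (simp only: comm_T[OF assms])
qed

lemma ee_Z2:
  fixes a b c :: "'a::{order,finite}"
  assumes "a < b" "b < c"
  shows "(ee a b c :: ('a, 'r::comm_ring_1) fun3) \<in> Z3_2"
proof -
  have "commutator3 (ee a b b) (ee b b c) \<in> (Z3_2 :: ('a,'r) fun3 set)"
    by (intro Z2_base ee_J1) (use assms in auto)
  thus ?thesis by (simp only: comm_e[OF assms])
qed

lemma ee_Z3_mid: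
  fixes a b c :: "'a::{order,finite}"
  assumes "a < b" "b < c"
  shows "(ee a b c :: ('a, 'r::comm_ring_1) fun3) \<in> Z3_3"
proof -
  have "commutator3 (TT a b) (TT b c) \<in> (Z3_3 :: ('a,'r) fun3 set)"
    by (intro Z3_base TT_Z2) (use assms in auto)
  thus ?thesis by (simp only: comm_TT[OF assms])
qed

lemma Z3_lin:
  assumes "F \<in> (Z3_3 :: ('a::{order,finite}, 'r::comm_ring_1) fun3 set)" "G \<in> Z3_3"
  shows "(\<lambda>x y z. F x y z + r * G x y z) \<in> Z3_3"
  using assms unfolding Z3_3_def bracket3_def by (intro rspan.add rspan.smult)

lemma cover_above:
  fixes a c :: "'a::{order,finite}"
  assumes "a < b" "b < c"
  shows "\<exists>m. a < m \<and> m < c \<and> (\<forall>x. \<not> (a < x \<and> x < m))"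
proof -
  obtain m where m: "m \<in> {x. a < x \<and> x < c}" "\<forall>y \<in> {x. a < x \<and> x < c}. y \<le> m \<longrightarrow> m = y"
    using finite_has_minimal[of "{x. a < x \<and> x < c}"] assms by auto
  show ?thesis
    using m by (intro exI[of _ m]) (auto dest: order.strict_trans)
qed

lemma cover_below:
  fixes a c :: "'a::{order,finite}"
  assumes "a < b" "b < c"
  shows "\<exists>m. a < m \<and> m < c \<and> (\<forall>x. \<not> (m < x \<and> x < c))"
proof -
  obtain m where m: "m \<in> {x. a < x \<and> x < c}" "\<forall>y \<in> {x. a < x \<and> x < c}. m \<le> y \<longrightarrow> m = y"
    using finite_has_maximal[of "{x. a < x \<and> x < c}"] assms by auto
  show ?thesis
    using m by (intro exI[of _ m]) (auto dest: order.strict_trans)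
qed

lemma ee_Z3:
  fixes a b c :: "'a::{order,finite}"
  assumes "a \<le> b" "b \<le> c" "a < m" "m < c"
  shows "(ee a b c :: ('a, 'r::comm_ring_1) fun3) \<in> Z3_3"
proof (cases "a < b \<and> b < c")
  case True
  thus ?thesis by (intro ee_Z3_mid) auto
next
  case False
  hence "b = a \<or> b = c" using assms by (auto simp: order.order_iff_strict)
  thus ?thesis
  proof
    assume b: "b = a"
    obtain d where d: "a < d" "d < c" "\<forall>x. \<not> (a < x \<and> x < d)"
      using cover_above[OF assms(3,4)] by blast
    have "commutator3 (TT a d) (ee a d c) \<in> (Z3_3 :: ('a, 'r) fun3 set)"
      using d by (intro Z3_base TT_Z2 ee_Z2)
    hence "(\<lambda>x y z. commutator3 (TT a d) (ee a d c) x y z + (-1) * (ee a d c :: ('a, 'r) fun3) x y z) \<in> Z3_3"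
      using d by (intro Z3_lin ee_Z3_mid)
    also have "(\<lambda>x y z. commutator3 (TT a d) (ee a d c) x y z + (-1) * (ee a d c :: ('a, 'r) fun3) x y z) = ee a a c"
      unfolding comm_left[OF d(1,2) d(3)[rule_format]] by simp
    finally show ?thesis using b by simp
  next
    assume b: "b = c"
    obtain d where d: "a < d" "d < c" "\<forall>x. \<not> (d < x \<and> x < c)"
      using cover_below[OF assms(3,4)] by blast
    have "commutator3 (ee a d c) (TT d c) \<in> (Z3_3 :: ('a, 'r) fun3 set)"
      using d by (intro Z3_base TT_Z2 ee_Z2)
    hence "(\<lambda>x y z. commutator3 (ee a d c) (TT d c) x y z + (-1) * (ee a d c :: ('a, 'r) fun3) x y z) \<in> Z3_3"
      using d by (intro Z3_lin ee_Z3_mid)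
    also have "(\<lambda>x y z. commutator3 (ee a d c) (TT d c) x y z + (-1) * (ee a d c :: ('a, 'r) fun3) x y z) = ee a c c"
      unfolding comm_right[OF d(1,2) d(3)[rule_format]] by simp
    finally show ?thesis using b by simp
  qed
qed

lemma rspan_sum:
  assumes "finite U" "\<And>t. t \<in> U \<Longrightarrow> g t \<in> rspan S"
  shows "(\<lambda>x y z. \<Sum>t\<in>U. r t * g t x y z) \<in> rspan S"
  using assms
proof (induction U rule: finite_induct)
  case empty
  then show ?case using rspan.zero by simp
next
  case (insert t U)
  have "(\<lambda>x y z. (\<lambda>x y z. r t * g t x y z) x y z + (\<lambda>x y z. \<Sum>t\<in>U. r t * g t x y z) x y z) \<in> rspan S"
    using insert by (intro rspan.add rspan.smult) auto
  thus ?case using insert by simp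
qed

lemma J2_sub_Z3: "(J3 2 :: ('a::{order,finite}, 'r::comm_ring_1) fun3 set) \<subseteq> Z3_3"
proof
  fix f :: "('a, 'r) fun3"
  assume f: "f \<in> J3 2"
  define U where "U = {t :: 'a \<times> 'a \<times> 'a. f (fst t) (fst (snd t)) (snd (snd t)) \<noteq> 0}"
  have fU: "\<forall>t\<in>U. f (fst t) (fst (snd t)) (snd (snd t)) \<noteq> 0" unfolding U_def by simp
  have "(\<lambda>x y z. \<Sum>t\<in>U. f (fst t) (fst (snd t)) (snd (snd t)) * ee (fst t) (fst (snd t)) (snd (snd t)) x y z) \<in> Z3_3"
    unfolding Z3_3_def bracket3_def
  proof (rule rspan_sum)
    fix t assume "t \<in> U"
    then obtain a b c where t: "t = (a,b,c)" "f a b c \<noteq> 0" unfolding U_def by (cases t) auto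
    have "f \<in> I3" "\<exists>m. a < m \<and> m < c" using f t unfolding J2_char by auto
    moreover have "a \<le> b" "b \<le> c" using t \<open>f \<in> I3\<close> unfolding I3_def by auto
    ultimately have "(ee a b c :: ('a, 'r) fun3) \<in> Z3_3" using ee_Z3 by blast
    thus "(ee (fst t) (fst (snd t)) (snd (snd t)) :: ('a, 'r) fun3) \<in> rspan {commutator3 u v |u v. u \<in> Z3_2 \<and> v \<in> Z3_2}"
      unfolding Z3_3_def bracket3_def t by simp
  qed simp
  also have "(\<lambda>x y z. \<Sum>t\<in>U. f (fst t) (fst (snd t)) (snd (snd t)) * ee (fst t) (fst (snd t)) (snd (snd t)) x y z) = f"
  proof (intro ext)
    fix x y z
    have "(\<Sum>t\<in>U. f (fst t) (fst (snd t)) (snd (snd t)) * ee (fst t) (fst (snd t)) (snd (snd t)) x y z)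
        = (\<Sum>t\<in>U. if t = (x,y,z) then f x y z else 0)"
      by (rule sum.cong) (auto simp: ee_def)
    also have "\<dots> = f x y z" by (subst sum.delta) (auto simp: U_def)
    finally show "(\<Sum>t\<in>U. f (fst t) (fst (snd t)) (snd (snd t)) * ee (fst t) (fst (snd t)) (snd (snd t)) x y z) = f x y z" .
  qed
  finally show "f \<in> Z3_3" .
qed

section \<open>Z3 subset J2\<close>

definition cov :: "'a::order \<Rightarrow> 'a \<Rightarrow> bool" where
  "cov a b \<longleftrightarrow> a < b \<and> (\<forall>c. \<not> (a < c \<and> c < b))"

lemma mult_diag:
  "mult3 f g x x x = (f x x x * g x x x :: 'r::comm_ring_1)" for x :: "'a::{order,finite}"
proof -
  have "{(y1, y2). x \<le> y1 \<and> y1 \<le> x \<and> x \<le> y2 \<and> y2 \<le> x} = {(x,x)}"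
    by (auto intro: order.antisym)
  thus ?thesis unfolding mult3_def by simp
qed

lemma mult_cov1:
  fixes a b :: "'a::{order,finite}"
  assumes "cov a b"
  shows "mult3 f g a a b = (f a a a * g a a b + f a a b * g a b b :: 'r::comm_ring_1)"
proof -
  have "{(y1, y2). a \<le> y1 \<and> y1 \<le> a \<and> a \<le> y2 \<and> y2 \<le> b} = {(a,a),(a,b)}"
    using assms unfolding cov_def by (auto intro: order.antisym simp: order.order_iff_strict)
  moreover have "a \<noteq> b" using assms unfolding cov_def by auto
  ultimately show ?thesis using assms unfolding mult3_def cov_def by (simp add: order.strict_implies_order)
qed

lemma mult_cov2:
  fixes a b :: "'a::{order,finite}"
  assumes "cov a b"
  shows "mult3 f g a b b = (f a a b * g a b b + f a b b * g b b b :: 'r::comm_ring_1)"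
proof -
  have "{(y1, y2). a \<le> y1 \<and> y1 \<le> b \<and> b \<le> y2 \<and> y2 \<le> b} = {(a,b),(b,b)}"
    using assms unfolding cov_def by (auto intro: order.antisym simp: order.order_iff_strict)
  moreover have "a \<noteq> b" using assms unfolding cov_def by auto
  ultimately show ?thesis using assms unfolding mult3_def cov_def by (simp add: order.strict_implies_order)
qed

lemma rspan_sub:
  assumes "h \<in> rspan S" "P (\<lambda>x y z. 0)" "\<And>f g. P f \<Longrightarrow> P g \<Longrightarrow> P (\<lambda>x y z. f x y z + g x y z)"
    "\<And>f r. P f \<Longrightarrow> P (\<lambda>x y z. r * f x y z)" "\<And>f. f \<in> S \<Longrightarrow> P f"
  shows "P h"
  using assms(1) by (induction h rule: rspan.induct) (auto intro: assms(2-))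

lemma comm_I3: "commutator3 u v \<in> I3"
  unfolding I3_def commutator3_def mult3_def by auto

lemma Z2_P:
  assumes "h \<in> (Z3_2 :: ('a::{order,finite}, 'r::comm_ring_1) fun3 set)"
  shows "h \<in> I3 \<and> (\<forall>x. h x x x = 0) \<and> (\<forall>a b. cov a b \<longrightarrow> h a a b = h a b b)"
  using assms unfolding Z3_2_def bracket3_def
proof (rule rspan_sub[where P = "\<lambda>h. h \<in> I3 \<and> (\<forall>x. h x x x = 0) \<and> (\<forall>a b. cov a b \<longrightarrow> h a a b = h a b b)"])
  fix f assume "f \<in> {commutator3 u v |u v. u \<in> Z3_1 \<and> v \<in> (Z3_1 :: ('a, 'r) fun3 set)}"
  then obtain u v where f: "f = commutator3 u v" "u \<in> J3 1" "v \<in> J3 1" unfolding Z3_1_def by blast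
  have d: "u x x x = 0" "v x x x = 0" for x using f len_aa[of x] unfolding J3_def by auto
  show "f \<in> I3 \<and> (\<forall>x. f x x x = 0) \<and> (\<forall>a b. cov a b \<longrightarrow> f a a b = f a b b)"
    using f(1) comm_I3 d by (auto simp: commutator3_def mult_diag mult_cov1 mult_cov2 mult.commute)
qed (auto simp: I3_def, (metis)+)

lemma Z3_P:
  assumes "h \<in> (Z3_3 :: ('a::{order,finite}, 'r::comm_ring_1) fun3 set)"
  shows "h \<in> I3 \<and> (\<forall>x. h x x x = 0) \<and> (\<forall>a b. cov a b \<longrightarrow> h a a b = 0 \<and> h a b b = 0)"
  using assms unfolding Z3_3_def bracket3_def
proof (rule rspan_sub[where P = "\<lambda>h. h \<in> I3 \<and> (\<forall>x. h x x x = 0) \<and> (\<forall>a b. cov a b \<longrightarrow> h a a b = 0 \<and> h a b b = 0)"])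
  fix f assume "f \<in> {commutator3 u v |u v. u \<in> Z3_2 \<and> v \<in> (Z3_2 :: ('a, 'r) fun3 set)}"
  then obtain u v where f: "f = commutator3 u v" "u \<in> Z3_2" "v \<in> (Z3_2 :: ('a, 'r) fun3 set)" by blast
  note U = Z2_P[OF f(2)] and V = Z2_P[OF f(3)]
  show "f \<in> I3 \<and> (\<forall>x. f x x x = 0) \<and> (\<forall>a b. cov a b \<longrightarrow> f a a b = 0 \<and> f a b b = 0)"
  proof (intro conjI allI impI)
    show "f \<in> I3" using f(1) comm_I3 by simp
    fix x :: 'a show "f x x x = 0" using f(1) U V by (simp add: commutator3_def mult_diag)
  next
    fix a b :: 'a assume c: "cov a b"
    have e: "u a a b = u a b b" "v a a b = v a b b" using U V c by auto
    show "f a a b = 0" "f a b b = 0" using c U V e unfolding f(1) commutator3_def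
      by (simp_all add: mult_cov1 mult_cov2 mult.commute)
  qed
qed (auto simp: I3_def)

lemma Z3_sub_J2: "(Z3_3 :: ('a::{order,finite}, 'r::comm_ring_1) fun3 set) \<subseteq> J3 2"
proof
  fix h :: "('a, 'r) fun3" assume "h \<in> Z3_3"
  note H = Z3_P[OF this]
  show "h \<in> J3 2" unfolding J2_char
  proof (safe)
    show "h \<in> I3" using H by simp
    fix x1 x2 x3 assume nz: "h x1 x2 x3 \<noteq> 0"
    hence le: "x1 \<le> x2" "x2 \<le> x3" using H unfolding I3_def by auto
    show "\<exists>c. x1 < c \<and> c < x3"
    proof (rule ccontr)
      assume nc: "\<not> (\<exists>c. x1 < c \<and> c < x3)"
      show False
      proof (cases "x1 = x3")
        case True
        hence "x2 = x1" using le by auto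
        thus False using nz H True by auto
      next
        case False
        hence cv: "cov x1 x3" using le nc unfolding cov_def by auto
        have "x2 = x1 \<or> x2 = x3" using le nc by (auto simp: order.order_iff_strict)
        thus False using nz H cv by auto
      qed
    qed
  qed
qed

lemma J2_ideal: "ideal3 (J3 2 :: ('a::{order,finite}, 'r::comm_ring_1) fun3 set)"
  unfolding ideal3_def J2_char
proof (safe)
  show "(\<lambda>x y z. 0) \<in> (I3 :: ('a, 'r) fun3 set)" by (simp add: I3_def)
next
  fix f g :: "('a, 'r) fun3" and r
  assume "f \<in> I3" "g \<in> I3"
  thus "(\<lambda>x y z. f x y z + g x y z) \<in> I3" "(\<lambda>x y z. r * f x y z) \<in> I3"
    by (auto simp: I3_def)
next
  fix f g :: "('a, 'r) fun3" and x1 x2 x3 :: 'a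
  assume f: "\<forall>x1 x2 x3. f x1 x2 x3 \<noteq> 0 \<longrightarrow> (\<exists>c>x1. c < x3)"
  { assume "mult3 f g x1 x2 x3 \<noteq> 0"
    then obtain y1 y2 where "x1 \<le> y1" "y1 \<le> x2" "x2 \<le> y2" "y2 \<le> x3" "f x1 y1 y2 \<noteq> 0"
      using mult3_nz by blast
    thus "\<exists>c>x1. c < x3" using f by (meson order.strict_trans2)
  }
  { assume "mult3 g f x1 x2 x3 \<noteq> 0"
    then obtain y1 y2 where "x1 \<le> y1" "y1 \<le> x2" "x2 \<le> y2" "y2 \<le> x3" "f y1 y2 x3 \<noteq> 0"
      using mult3_nz by blast
    thus "\<exists>c>x1. c < x3" using f by (meson order.strict_trans1)
  }
next
  fix f g :: "('a, 'r) fun3"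
  show "mult3 f g \<in> I3" unfolding I3_def mult3_def by auto
  show "mult3 g f \<in> I3" unfolding I3_def mult3_def by auto
next
  fix f :: "('a, 'r) fun3" and x1 x2 x3 r
  assume "\<forall>x1 x2 x3. f x1 x2 x3 \<noteq> 0 \<longrightarrow> (\<exists>c>x1. c < x3)" "r * f x1 x2 x3 \<noteq> 0"
  thus "\<exists>c>x1. c < x3" by (metis mult_zero_right)
next
  fix f g :: "('a, 'r) fun3" and x1 x2 x3
  assume "\<forall>x1 x2 x3. f x1 x2 x3 \<noteq> 0 \<longrightarrow> (\<exists>c>x1. c < x3)"
    "\<forall>x1 x2 x3. g x1 x2 x3 \<noteq> 0 \<longrightarrow> (\<exists>c>x1. c < x3)" "f x1 x2 x3 + g x1 x2 x3 \<noteq> 0"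
  thus "\<exists>c>x1. c < x3" by (metis add.left_neutral)
qed

theorem lemma2p6:
  shows "(Z3_3 :: ('a::{order,finite}, 'r::comm_ring_1) fun3 set) = J3 2 \<and> ideal3 (Z3_3 :: ('a, 'r) fun3 set)"
proof -
  have eq: "(Z3_3 :: ('a, 'r) fun3 set) = J3 2" using Z3_sub_J2 J2_sub_Z3 by blast
  show ?thesis using J2_ideal unfolding eq by simp
qed

end
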